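(* Let $A=\{\mathbf{a}_1,\dots,\mathbf{a}_n\}\subseteq\mathbb{R}^d$ with hidden partition $\mathcal{V}=\{V_1,\dots,V_K\}$, and let $N_1:=\sum_{\alpha=1}^K\binom{n_\alpha}{2}$, $N_2:=\binom{K+1}{2}$. Let $0<\epsilon<1$, $p>1$, $\delta:=(N_1+N_2)^{-p}$, and let $\Pi\in\mathbb{R}^{m\times d}$ be drawn from a DJL distribution $\mathcal{D}_{\epsilon,\delta}$. Let $E_1$ be the event that $(1-\epsilon)\|\mathbf{a}_i-\mathbf{a}_j\|^2\le\|\Pi(\mathbf{a}_i-\mathbf{a}_j)\|^2\le(1+\epsilon)\|\mathbf{a}_i-\mathbf{a}_j\|^2$ for all $\mathbf{a}_i,\mathbf{a}_j\in V_\alpha$, $1\le\alpha\le K$, and $E_2$ the event that $(1-\epsilon)\|\mathbf{a}^{(\alpha)}-\mathbf{a}^{(\beta)}\|^2\le\|\Pi(\mathbf{a}^{(\alpha)}-\mathbf{a}^{(\beta)})\|^2\le(1+\epsilon)\|\mathbf{a}^{(\alpha)}-\mathbf{a}^{(\beta)}\|^2$ for all $1\le\alpha\ne\beta\le K$. Then $\mathbb{P}[E_2\mid E_1]\ge 1-\frac{N_2}{(N_1+N_2)^p-N_1}$. If moreover $N_2\le n/2$ and $\delta=2/n^{p+1}$ (with $\Pi$ drawn from $\mathcal{D}_{\epsilon,\delta}$ for this $\delta$), then $\mathbb{P}[E_2\mid E_1]\ge 1-\frac{1}{n^p-n+1}$.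
   Context: $\|\cdot\|$ is the Euclidean norm. $I_\alpha:=\{i:\mathbf{a}_i\in V_\alpha\}$, $n_\alpha:=|I_\alpha|$, $\mathbf{a}^{(\alpha)}:=\frac{1}{n_\alpha}\sum_{i\in I_\alpha}\mathbf{a}_i$. For $\epsilon\in(0,1)$, $\delta\in(0,1)$, a DJL distribution $\mathcal{D}_{\epsilon,\delta}$ is a probability distribution over matrices $\Pi\in\mathbb{R}^{m\times d}$ such that for every $z\in\mathbb{R}^d$ with $\|z\|=1$, $\mathbb{P}_{\Pi\sim\mathcal{D}_{\epsilon,\delta}}[\,|\|\Pi z\|^2-1|>\epsilon\,]<\delta$. *)

theory Defs
  imports "HOL-Probability.Probability"
begin

text \<open>Points are indexed by i < n, the hidden partition is given by a labelling
  lab :: nat => nat with lab ` {..<n} = {..<K}; block alpha is V_alpha = {a i | i<n, lab i = alpha}.\<close>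

definition blk :: "(nat \<Rightarrow> nat) \<Rightarrow> nat \<Rightarrow> nat \<Rightarrow> nat set" where
  "blk lab n \<alpha> = {i. i < n \<and> lab i = \<alpha>}"

definition centroid :: "(nat \<Rightarrow> real^'d) \<Rightarrow> (nat \<Rightarrow> nat) \<Rightarrow> nat \<Rightarrow> nat \<Rightarrow> real^'d" where
  "centroid a lab n \<alpha> = (1 / real (card (blk lab n \<alpha>))) *\<^sub>R (\<Sum>i\<in>blk lab n \<alpha>. a i)"

definition N1 :: "(nat \<Rightarrow> nat) \<Rightarrow> nat \<Rightarrow> nat \<Rightarrow> nat" where
  "N1 lab n K = (\<Sum>\<alpha><K. card (blk lab n \<alpha>) choose 2)"

definition N2 :: "nat \<Rightarrow> nat" where
  "N2 K = (K + 1) choose 2"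

definition DJL :: "(real^'d^'m) measure \<Rightarrow> real \<Rightarrow> real \<Rightarrow> bool" where
  "DJL M \<epsilon> \<delta> \<longleftrightarrow> 0 < \<epsilon> \<and> \<epsilon> < 1 \<and> 0 < \<delta> \<and> \<delta> < 1 \<and>
     prob_space M \<and> sets M = sets borel \<and>
     (\<forall>z::real^'d. norm z = 1 \<longrightarrow>
        measure M {P \<in> space M. \<bar>(norm (P *v z))\<^sup>2 - 1\<bar> > \<epsilon>} < \<delta>)"

definition preserves :: "real \<Rightarrow> real^'d^'m \<Rightarrow> real^'d \<Rightarrow> bool" where
  "preserves \<epsilon> P x \<longleftrightarrow> (1 - \<epsilon>) * (norm x)\<^sup>2 \<le> (norm (P *v x))\<^sup>2 \<and>
                          (norm (P *v x))\<^sup>2 \<le> (1 + \<epsilon>) * (norm x)\<^sup>2"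

definition E1 :: "(real^'d^'m) measure \<Rightarrow> real \<Rightarrow> (nat \<Rightarrow> real^'d) \<Rightarrow> (nat \<Rightarrow> nat) \<Rightarrow> nat \<Rightarrow> (real^'d^'m) set" where
  "E1 M \<epsilon> a lab n = {P \<in> space M. \<forall>i<n. \<forall>j<n. lab i = lab j \<longrightarrow> preserves \<epsilon> P (a i - a j)}"

definition E2 :: "(real^'d^'m) measure \<Rightarrow> real \<Rightarrow> (nat \<Rightarrow> real^'d) \<Rightarrow> (nat \<Rightarrow> nat) \<Rightarrow> nat \<Rightarrow> nat \<Rightarrow> (real^'d^'m) set" where
  "E2 M \<epsilon> a lab n K = {P \<in> space M. \<forall>\<alpha><K. \<forall>\<beta><K. \<alpha> \<noteq> \<beta> \<longrightarrow>
       preserves \<epsilon> P (centroid a lab n \<alpha> - centroid a lab n \<beta>)}"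

definition cprob :: "'a measure \<Rightarrow> 'a set \<Rightarrow> 'a set \<Rightarrow> real" where
  "cprob M B A = measure M (A \<inter> B) / measure M A"

end

theory Submission
  imports Defs
begin

lemma meas_mv: "(\<lambda>P::real^'d^'m. P *v z) \<in> borel_measurable borel"
  unfolding matrix_vector_mult_def
  by (intro borel_measurable_continuous_onI continuous_intros)

lemma pres_meas:
  fixes M :: "(real^'d^'m) measure" and x :: "real^'d"
  assumes "sets M = sets borel"
  shows "{P \<in> space M. \<not> preserves e P x} \<in> sets M"
proof -
  have m: "(\<lambda>P::real^'d^'m. P *v x) \<in> borel_measurable M"
    using meas_mv measurable_cong_sets[OF assms refl] by blast
  show ?thesis unfolding preserves_def using m by measurable
qed

lemma pres_minus: "preserves e P (- x) = preserves e P x"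
proof -
  have "P *v (0 - x) = P *v 0 - P *v x" by (rule matrix_vector_mult_diff_distrib)
  then have "P *v (- x) = - (P *v x)" by simp
  then show ?thesis unfolding preserves_def by simp
qed

lemma pres_zero: "preserves e P 0" if "0 \<le> e" for e :: real
  using that unfolding preserves_def by simp

lemma bad_le:
  fixes M :: "(real^'d^'m) measure" and x :: "real^'d"
  assumes D: "DJL M e d"
  shows "measure M {P \<in> space M. \<not> preserves e P x} \<le> d"
proof (cases "x = 0")
  case True
  have "0 \<le> e" using D unfolding DJL_def by simp
  then have "{P \<in> space M. \<not> preserves e P x} = {}" using True pres_zero by auto
  then show ?thesis using D unfolding DJL_def by (metis measure_empty less_imp_le)
next
  case False
  define z where "z = (1 / norm x) *\<^sub>R x"
  have nx: "norm x > 0" using False by simp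
  have nz: "norm z = 1" using nx unfolding z_def by simp
  have eq: "\<not> preserves e P x \<longleftrightarrow> \<bar>(norm (P *v z))\<^sup>2 - 1\<bar> > e" for P
  proof -
    have "P *v z = (1 / norm x) *\<^sub>R (P *v x)" unfolding z_def
      by (simp add: matrix_vector_mult_scaleR)
    then have h: "(norm (P *v z))\<^sup>2 = (norm (P *v x))\<^sup>2 / (norm x)\<^sup>2"
      using nx by (simp add: power_divide)
    define r where "r = (norm (P *v x))\<^sup>2"
    define s where "s = (norm x)\<^sup>2"
    have s: "s > 0" using nx unfolding s_def by simp
    have "preserves e P x \<longleftrightarrow> (1 - e) * s \<le> r \<and> r \<le> (1 + e) * s"
      unfolding preserves_def r_def s_def by simp
    also have "\<dots> \<longleftrightarrow> \<bar>r / s - 1\<bar> \<le> e"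
      using s by (auto simp: abs_le_iff field_simps)
    finally show ?thesis using h unfolding r_def s_def by auto
  qed
  have "{P \<in> space M. \<not> preserves e P x} = {P \<in> space M. \<bar>(norm (P *v z))\<^sup>2 - 1\<bar> > e}"
    using eq by auto
  then show ?thesis using D nz unfolding DJL_def by auto
qed

lemma union_bound:
  assumes "prob_space M" "finite F" "\<And>i. i \<in> F \<Longrightarrow> B i \<in> sets M"
    "\<And>i. i \<in> F \<Longrightarrow> measure M (B i) \<le> d"
  shows "measure M (\<Union>i\<in>F. B i) \<le> real (card F) * d"
proof -
  have "measure M (\<Union>i\<in>F. B i) \<le> (\<Sum>i\<in>F. measure M (B i))"
    using assms measure_UNION_le by blast
  also have "\<dots> \<le> real (card F) * d"
    using sum_bounded_above[of F "\<lambda>i. measure M (B i)" d] assms(4) by simp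
  finally show ?thesis .
qed

lemma cond_bound:
  assumes M: "prob_space M" and U: "U1 \<in> sets M" "U2 \<in> sets M"
    and E: "X1 = space M - U1" "X2 = space M - U2"
    and b1: "measure M U1 \<le> c1" and b2: "measure M U2 \<le> c2" and c: "c1 < 1" and c2: "0 \<le> c2"
  shows "cprob M X2 X1 \<ge> 1 - c2 / (1 - c1)"
proof -
  interpret prob_space M by fact
  have m1: "measure M X1 = 1 - measure M U1" using E U prob_compl by simp
  have pos: "measure M X1 \<ge> 1 - c1" "1 - c1 > 0" using m1 b1 c by auto
  have X1s: "X1 \<in> sets M" "X1 \<inter> X2 \<in> sets M" using E U by auto
  have "X1 \<subseteq> (X1 \<inter> X2) \<union> U2" using E by auto
  then have "measure M X1 \<le> measure M ((X1 \<inter> X2) \<union> U2)"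
    using X1s U by (intro finite_measure_mono) auto
  also have "\<dots> \<le> measure M (X1 \<inter> X2) + measure M U2"
    using X1s U by (intro measure_Un_le) auto
  finally have i: "measure M (X1 \<inter> X2) \<ge> measure M X1 - measure M U2" by simp
  have "1 - c2 / (1 - c1) \<le> 1 - measure M U2 / measure M X1"
  proof -
    have "measure M U2 / measure M X1 \<le> c2 / (1 - c1)"
      by (rule frac_le[OF c2 b2 pos(2) pos(1)])
    then show ?thesis by simp
  qed
  also have "\<dots> = (measure M X1 - measure M U2) / measure M X1"
    using pos by (simp add: field_simps)
  also have "\<dots> \<le> measure M (X1 \<inter> X2) / measure M X1"
    using pos i by (simp add: divide_right_mono)
  finally show ?thesis unfolding cprob_def .
qed

lemma choose2_real: "real (n choose 2) = real n * (real n - 1) / 2"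
proof (induction n)
  case 0 then show ?case by simp
next
  case (Suc n)
  have "Suc n choose 2 = n + (n choose 2)"
    by (simp add: numeral_2_eq_2)
  then show ?case using Suc by (simp add: field_simps)
qed

lemma pairs_lemma:
  fixes f :: "nat \<Rightarrow> real^'d" and M :: "(real^'d^'m) measure"
  assumes e: "0 \<le> e" and sym: "\<And>i j. Q i j \<Longrightarrow> Q j i"
  shows "{P \<in> space M. \<forall>i<n. \<forall>j<n. Q i j \<longrightarrow> preserves e P (f i - f j)} =
     space M - (\<Union>x\<in>{x. x \<subseteq> {..<n} \<and> card x = 2 \<and> (\<forall>i\<in>x. \<forall>j\<in>x. i \<noteq> j \<longrightarrow> Q i j)}.
                 {P \<in> space M. \<not> preserves e P (f (Min x) - f (Max x))})"
proof (intro equalityI subsetI)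
  fix P assume P: "P \<in> {P \<in> space M. \<forall>i<n. \<forall>j<n. Q i j \<longrightarrow> preserves e P (f i - f j)}"
  show "P \<in> space M - (\<Union>x\<in>{x. x \<subseteq> {..<n} \<and> card x = 2 \<and> (\<forall>i\<in>x. \<forall>j\<in>x. i \<noteq> j \<longrightarrow> Q i j)}.
                 {P \<in> space M. \<not> preserves e P (f (Min x) - f (Max x))})"
  proof -
    have "preserves e P (f (Min x) - f (Max x))"
      if x: "x \<subseteq> {..<n}" "card x = 2" "\<forall>i\<in>x. \<forall>j\<in>x. i \<noteq> j \<longrightarrow> Q i j" for x
    proof -
      obtain i j where ij: "x = {i, j}" "i \<noteq> j" using x by (auto simp: card_2_iff)
      have fx: "finite x" "x \<noteq> {}" using ij by auto
      have "Min x \<in> x" "Max x \<in> x" using Min_in Max_in fx by auto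
      moreover have "Min x \<noteq> Max x" using ij by (auto simp: min_def max_def)
      ultimately have mm: "Min x < n" "Max x < n" "Q (Min x) (Max x)" using x by auto
      show ?thesis using P mm by blast
    qed
    then show ?thesis using P by auto
  qed
next
  fix P assume P: "P \<in> space M - (\<Union>x\<in>{x. x \<subseteq> {..<n} \<and> card x = 2 \<and> (\<forall>i\<in>x. \<forall>j\<in>x. i \<noteq> j \<longrightarrow> Q i j)}.
                 {P \<in> space M. \<not> preserves e P (f (Min x) - f (Max x))})"
  have "preserves e P (f i - f j)" if ij: "i < n" "j < n" "Q i j" for i j
  proof (cases "i = j")
    case True then show ?thesis using pres_zero[OF e] by simp
  next
    case False
    define x where "x = {i, j}"
    have x: "x \<subseteq> {..<n}" "card x = 2" "\<forall>i\<in>x. \<forall>j\<in>x. i \<noteq> j \<longrightarrow> Q i j"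
      using ij False sym unfolding x_def by auto
    then have pr: "preserves e P (f (Min x) - f (Max x))" using P by auto
    show ?thesis
    proof (cases "i < j")
      case True
      then have "Min x = i" "Max x = j" unfolding x_def by auto
      then show ?thesis using pr by simp
    next
      case c: False
      then have "Min x = j" "Max x = i" using False unfolding x_def by auto
      then have "preserves e P (- (f i - f j))" using pr by simp
      then show ?thesis using pres_minus by blast
    qed
  qed
  then show "P \<in> {P \<in> space M. \<forall>i<n. \<forall>j<n. Q i j \<longrightarrow> preserves e P (f i - f j)}"
    using P by auto
qed

lemma U_facts:
  fixes M :: "(real^'d^'m) measure" and f :: "nat \<Rightarrow> real^'d"
  assumes D: "DJL M e d"
  shows "(\<Union>x\<in>{x. x \<subseteq> {..<n} \<and> card x = 2 \<and> (\<forall>i\<in>x. \<forall>j\<in>x. i \<noteq> j \<longrightarrow> Q i j)}.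
                 {P \<in> space M. \<not> preserves e P (f (Min x) - f (Max x))}) \<in> sets M"
    "measure M (\<Union>x\<in>{x. x \<subseteq> {..<n} \<and> card x = 2 \<and> (\<forall>i\<in>x. \<forall>j\<in>x. i \<noteq> j \<longrightarrow> Q i j)}.
                 {P \<in> space M. \<not> preserves e P (f (Min x) - f (Max x))})
       \<le> real (card {x. x \<subseteq> {..<n} \<and> card x = 2 \<and> (\<forall>i\<in>x. \<forall>j\<in>x. i \<noteq> j \<longrightarrow> Q i j)}) * d"
proof -
  let ?S = "{x. x \<subseteq> {..<n} \<and> card x = 2 \<and> (\<forall>i\<in>x. \<forall>j\<in>x. i \<noteq> j \<longrightarrow> Q i j)}"
  have fin: "finite ?S"
    by (rule finite_subset[of _ "Pow {..<n}"]) auto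
  have sb: "sets M = sets borel" and ps: "prob_space M" using D unfolding DJL_def by auto
  have ms: "{P \<in> space M. \<not> preserves e P (f (Min x) - f (Max x))} \<in> sets M" for x
    using pres_meas[OF sb] by blast
  show "(\<Union>x\<in>?S. {P \<in> space M. \<not> preserves e P (f (Min x) - f (Max x))}) \<in> sets M"
    using fin ms by blast
  show "measure M (\<Union>x\<in>?S. {P \<in> space M. \<not> preserves e P (f (Min x) - f (Max x))})
       \<le> real (card ?S) * d"
    by (rule union_bound[OF ps fin ms bad_le[OF D]])
qed

lemma key:
  fixes M :: "(real^'d^'m) measure" and a :: "nat \<Rightarrow> real^'d"
  assumes D: "DJL M e d"
    and c1: "real (card {x. x \<subseteq> {..<n} \<and> card x = 2 \<and> (\<forall>i\<in>x. \<forall>j\<in>x. i \<noteq> j \<longrightarrow> lab i = lab j)}) \<le> c1"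
    and c2: "real (card {x. x \<subseteq> {..<K} \<and> card x = (2::nat) \<and> (\<forall>i\<in>x. \<forall>j\<in>x. i \<noteq> j \<longrightarrow> i \<noteq> j)}) \<le> c2"
    and lt: "c1 * d < 1"
  shows "cprob M (E2 M e a lab n K) (E1 M e a lab n) \<ge> 1 - c2 * d / (1 - c1 * d)"
proof -
  have e: "0 \<le> e" "0 < d" and ps: "prob_space M" using D unfolding DJL_def by auto
  note U1 = U_facts[OF D, where n=n and Q="\<lambda>i j. lab i = lab j" and f=a]
  note U2 = U_facts[OF D, where n=K and Q="\<lambda>i j. i \<noteq> j" and f="centroid a lab n"]
  have E1eq: "E1 M e a lab n = space M - (\<Union>x\<in>{x. x \<subseteq> {..<n} \<and> card x = 2 \<and> (\<forall>i\<in>x. \<forall>j\<in>x. i \<noteq> j \<longrightarrow> lab i = lab j)}.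
                 {P \<in> space M. \<not> preserves e P (a (Min x) - a (Max x))})"
    unfolding E1_def by (rule pairs_lemma[OF e(1)]) simp
  have E2eq: "E2 M e a lab n K = space M - (\<Union>x\<in>{x. x \<subseteq> {..<K} \<and> card x = 2 \<and> (\<forall>i\<in>x. \<forall>j\<in>x. i \<noteq> j \<longrightarrow> i \<noteq> j)}.
                 {P \<in> space M. \<not> preserves e P (centroid a lab n (Min x) - centroid a lab n (Max x))})"
    unfolding E2_def by (rule pairs_lemma[OF e(1)]) simp
  show ?thesis
  proof (rule cond_bound[OF ps U1(1) U2(1) E1eq E2eq])
    show "measure M (\<Union>x\<in>{x. x \<subseteq> {..<n} \<and> card x = 2 \<and> (\<forall>i\<in>x. \<forall>j\<in>x. i \<noteq> j \<longrightarrow> lab i = lab j)}.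
                 {P \<in> space M. \<not> preserves e P (a (Min x) - a (Max x))}) \<le> c1 * d"
      using U1(2) c1 e by (meson mult_right_mono less_imp_le order_trans)
    show "measure M (\<Union>x\<in>{x. x \<subseteq> {..<K} \<and> card x = 2 \<and> (\<forall>i\<in>x. \<forall>j\<in>x. i \<noteq> j \<longrightarrow> i \<noteq> j)}.
                 {P \<in> space M. \<not> preserves e P (centroid a lab n (Min x) - centroid a lab n (Max x))}) \<le> c2 * d"
      using U2(2) c2 e by (meson mult_right_mono less_imp_le order_trans)
    show "c1 * d < 1" by fact
    show "0 \<le> c2 * d" using c2 e by (meson of_nat_0_le_iff order_trans less_imp_le mult_nonneg_nonneg)
  qed
qed

lemma cardS1_n:
  "card {x. x \<subseteq> {..<n} \<and> card x = 2 \<and> (\<forall>i\<in>x. \<forall>j\<in>x. i \<noteq> j \<longrightarrow> lab i = lab j)} \<le> n choose 2"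
proof -
  have fin: "finite {x. x \<subseteq> {..<n} \<and> card x = (2::nat)}"
    by (rule finite_subset[of _ "Pow {..<n}"]) auto
  have "card {x. x \<subseteq> {..<n} \<and> card x = 2 \<and> (\<forall>i\<in>x. \<forall>j\<in>x. i \<noteq> j \<longrightarrow> lab i = lab j)}
     \<le> card {x. x \<subseteq> {..<n} \<and> card x = 2}"
    by (rule card_mono[OF fin]) blast
  also have "\<dots> = card {..<n} choose 2" by (rule n_subsets) simp
  also have "\<dots> = n choose 2" by simp
  finally show ?thesis .
qed

lemma cardT:
  "card {x. x \<subseteq> {..<K} \<and> card x = (2::nat) \<and> (\<forall>i\<in>x. \<forall>j\<in>x. i \<noteq> j \<longrightarrow> i \<noteq> j)} \<le> N2 K"
proof -
  have e: "{x. x \<subseteq> {..<K} \<and> card x = (2::nat) \<and> (\<forall>i\<in>x. \<forall>j\<in>x. i \<noteq> j \<longrightarrow> i \<noteq> j)}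
     = {x. x \<subseteq> {..<K} \<and> card x = 2}" by blast
  have "card {x. x \<subseteq> {..<K} \<and> card x = 2} = card {..<K} choose 2" by (rule n_subsets) simp
  also have "\<dots> = K choose (Suc 1)" by (simp add: numeral_2_eq_2)
  also have "\<dots> \<le> (K choose 1) + (K choose (Suc 1))" by simp
  also have "\<dots> = Suc K choose (Suc 1)" by (rule binomial_Suc_Suc[symmetric])
  also have "\<dots> = N2 K" unfolding N2_def by (simp add: numeral_2_eq_2)
  finally show ?thesis using e by simp
qed

lemma cardS1_N1:
  assumes part: "lab ` {..<n} = {..<K}"
  shows "card {x. x \<subseteq> {..<n} \<and> card x = 2 \<and> (\<forall>i\<in>x. \<forall>j\<in>x. i \<noteq> j \<longrightarrow> lab i = lab j)} \<le> N1 lab n K"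
proof -
  let ?S = "{x. x \<subseteq> {..<n} \<and> card x = 2 \<and> (\<forall>i\<in>x. \<forall>j\<in>x. i \<noteq> j \<longrightarrow> lab i = lab j)}"
  let ?A = "\<lambda>\<alpha>. {x. x \<subseteq> blk lab n \<alpha> \<and> card x = (2::nat)}"
  have fb: "finite (blk lab n \<alpha>)" for \<alpha> unfolding blk_def by simp
  have sub: "?S \<subseteq> (\<Union>\<alpha>\<in>{..<K}. ?A \<alpha>)"
  proof
    fix x assume x: "x \<in> ?S"
    have xs1: "x \<subseteq> {..<n}" using x by blast
    have xs2: "card x = 2" using x by blast
    have xs3: "\<forall>i\<in>x. \<forall>j\<in>x. i \<noteq> j \<longrightarrow> lab i = lab j" using x by blast
    note xs = xs1 xs2 xs3
    from xs(2) obtain i j where ij: "x = {i, j}" "i \<noteq> j" by (meson card_2_iff)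
    have ijn: "i < n" "j < n" using xs(1) ij(1) by auto
    have lij: "lab i = lab j" using xs(3) ij by blast
    have "lab i \<in> lab ` {..<n}" using ijn by simp
    then have lK: "lab i < K" using part by simp
    have "x \<subseteq> blk lab n (lab i)" unfolding blk_def ij
      using ijn lij by auto
    then show "x \<in> (\<Union>\<alpha>\<in>{..<K}. ?A \<alpha>)" using xs(2) lK by blast
  qed
  have finA: "finite (?A \<alpha>)" for \<alpha>
    by (rule finite_subset[of _ "Pow (blk lab n \<alpha>)"]) (use fb in blast)+
  have fin: "finite (\<Union>\<alpha>\<in>{..<K}. ?A \<alpha>)"
    using finA by (intro finite_UN_I) simp_all
  have "card ?S \<le> card (\<Union>\<alpha>\<in>{..<K}. ?A \<alpha>)"
    by (rule card_mono[OF fin sub])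
  also have "\<dots> \<le> (\<Sum>\<alpha>\<in>{..<K}. card (?A \<alpha>))"
    by (rule card_UN_le) simp
  also have "\<dots> = N1 lab n K" unfolding N1_def
    by (rule sum.cong[OF refl], rule n_subsets[OF fb])
  finally show ?thesis .
qed

theorem proposition7:
  fixes a :: "nat \<Rightarrow> real^'d" and lab :: "nat \<Rightarrow> nat" and n K :: nat
    and \<epsilon> p :: real
  assumes inj: "inj_on a {..<n}"
    and part: "lab ` {..<n} = {..<K}"
    and eps: "0 < \<epsilon>" "\<epsilon> < 1"
    and p: "p > 1"
  shows "(\<forall>M :: (real^'d^'m) measure.
            DJL M \<epsilon> ((real (N1 lab n K + N2 K)) powr (- p)) \<longrightarrow>
            cprob M (E2 M \<epsilon> a lab n K) (E1 M \<epsilon> a lab n)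
              \<ge> 1 - real (N2 K) / ((real (N1 lab n K + N2 K)) powr p - real (N1 lab n K)))
         \<and> (real (N2 K) \<le> real n / 2 \<longrightarrow>
            (\<forall>M :: (real^'d^'m) measure.
              DJL M \<epsilon> (2 / (real n) powr (p + 1)) \<longrightarrow>
              cprob M (E2 M \<epsilon> a lab n K) (E1 M \<epsilon> a lab n)
                \<ge> 1 - 1 / ((real n) powr p - real n + 1)))"
proof (intro conjI allI impI)
  let ?S1 = "{x. x \<subseteq> {..<n} \<and> card x = 2 \<and> (\<forall>i\<in>x. \<forall>j\<in>x. i \<noteq> j \<longrightarrow> lab i = lab j)}"
  let ?T = "{x. x \<subseteq> {..<K} \<and> card x = (2::nat) \<and> (\<forall>i\<in>x. \<forall>j\<in>x. i \<noteq> j \<longrightarrow> i \<noteq> j)}"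
  have cS1: "real (card ?S1) \<le> real (N1 lab n K)"
    using cardS1_N1[OF part] by (simp only: of_nat_le_iff)
  have cS1n: "real (card ?S1) \<le> real n * (real n - 1) / 2"
    using cardS1_n[of n lab] unfolding choose2_real[symmetric] by (simp only: of_nat_le_iff)
  have cT: "real (card ?T) \<le> real (N2 K)" using cardT[of K] by (simp only: of_nat_le_iff)
  {
    fix M :: "(real^'d^'m) measure"
    assume D: "DJL M \<epsilon> ((real (N1 lab n K + N2 K)) powr (- p))"
    define s where "s = real (N1 lab n K + N2 K)"
    define S where "S = s powr p"
    define d where "d = s powr (- p)"
    have D': "DJL M \<epsilon> d" using D unfolding d_def s_def .
    have dpos: "d > 0" using D' unfolding DJL_def by simp
    have s0: "s \<noteq> 0"
    proof
      assume "s = 0" then have "d = 0" unfolding d_def by simp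
      then show False using dpos by simp
    qed
    have "K \<noteq> 0"
    proof
      assume K0: "K = 0"
      then have "{..<n} = ({}::nat set)" using part by simp
      then have "n = 0" using lessThan_empty_iff by blast
      then show False using s0 K0 unfolding s_def N1_def N2_def by simp
    qed
    then have "0 < (K + 1) choose 2" by (intro zero_less_binomial) simp
    then have N2pos: "N2 K \<ge> 1" unfolding N2_def by linarith
    have s1: "s \<ge> 1" using N2pos unfolding s_def by simp
    have "s powr 1 \<le> s powr p" by (rule powr_mono) (use s1 p in auto)
    then have Ss: "S \<ge> s" unfolding S_def using s1 by simp
    have Spos: "S > 0" using Ss s1 by simp
    have dS: "d = 1 / S" unfolding S_def d_def by (rule powr_minus_divide)
    have N1S: "real (N1 lab n K) < S" using Ss N2pos unfolding s_def by simp
    have "real (N1 lab n K) / S < 1" using N1S Spos by simp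
    then have lt: "real (N1 lab n K) * d < 1" unfolding dS by simp
    have calc: "cprob M (E2 M \<epsilon> a lab n K) (E1 M \<epsilon> a lab n)
       \<ge> 1 - real (N2 K) * d / (1 - real (N1 lab n K) * d)"
      by (rule key[OF D' cS1 cT lt])
    have eq: "real (N2 K) * d / (1 - real (N1 lab n K) * d) = real (N2 K) / (S - real (N1 lab n K))"
      using Spos N1S unfolding dS by (simp add: field_simps)
    show "cprob M (E2 M \<epsilon> a lab n K) (E1 M \<epsilon> a lab n)
              \<ge> 1 - real (N2 K) / ((real (N1 lab n K + N2 K)) powr p - real (N1 lab n K))"
      unfolding s_def[symmetric] S_def[symmetric] using calc eq by simp
  }
  {
    fix M :: "(real^'d^'m) measure"
    assume N2n: "real (N2 K) \<le> real n / 2"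
    assume D: "DJL M \<epsilon> (2 / (real n) powr (p + 1))"
    define Q where "Q = real n powr p"
    define d where "d = 2 / (real n) powr (p + 1)"
    have D': "DJL M \<epsilon> d" using D unfolding d_def .
    have dpos: "d > 0" using D' unfolding DJL_def by simp
    have n1: "real n \<ge> 1"
    proof (rule ccontr)
      assume "\<not> real n \<ge> 1"
      then have "n = 0" by simp
      then have "d = 0" unfolding d_def by simp
      then show False using dpos by simp
    qed
    have "real n powr 1 \<le> real n powr p" by (rule powr_mono) (use n1 p in auto)
    then have Qn: "Q \<ge> real n" unfolding Q_def using n1 by simp
    have Qpos: "Q > 0" using Qn n1 by simp
    have "real n powr (p + 1) = Q * real n" unfolding Q_def using n1 by (simp add: powr_add)
    then have dQ: "d = 2 / (Q * real n)" unfolding d_def by simp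
    have e1: "real n * (real n - 1) / 2 * d = (real n - 1) / Q"
      unfolding dQ using Qpos n1 by (simp add: field_simps)
    have e2: "real n / 2 * d = 1 / Q"
      unfolding dQ using Qpos n1 by (simp add: field_simps)
    have "(real n - 1) / Q < 1" using Qn Qpos by simp
    then have lt: "real n * (real n - 1) / 2 * d < 1" unfolding e1 .
    have c2: "real (card ?T) \<le> real n / 2" using cT N2n by linarith
    have calc: "cprob M (E2 M \<epsilon> a lab n K) (E1 M \<epsilon> a lab n)
       \<ge> 1 - real n / 2 * d / (1 - real n * (real n - 1) / 2 * d)"
      by (rule key[OF D' cS1n c2 lt])
    have "Q - real n + 1 > 0" using Qn by simp
    then have eq: "real n / 2 * d / (1 - real n * (real n - 1) / 2 * d) = 1 / (Q - real n + 1)"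
      unfolding e1 e2 using Qpos by (simp add: field_simps)
    show "cprob M (E2 M \<epsilon> a lab n K) (E1 M \<epsilon> a lab n)
                \<ge> 1 - 1 / ((real n) powr p - real n + 1)"
      unfolding Q_def[symmetric] using calc eq by simp
  }
qed

end
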